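(* Let $T=1$ and let $\mathcal I$ be a random variable with $\mathbb P(\mathcal I=1)=\mathbb P(\mathcal I=2)=\tfrac12$. Let $\mathcal F_t=\mathcal F^1_t$ be the $\sigma$-algebra generated by $\mathcal I$ and the $\mathbb P$-null sets for all $t\in[0,1]$, and let $\mathcal F^2_t$ be the trivial $\sigma$-algebra augmented by $\mathbb P$-null sets for all $t\in[0,1]$. Consider the payoff $$\mathcal P(\tau,\sigma)=f_\tau1_{\{\tau<\sigma\}}+g_\sigma1_{\{\sigma<\tau\}}+h_\tau1_{\{\tau=\sigma\}}$$ with $f_t\equiv1$, $g_t=\tfrac12t$, $h_t=1$ for $t<1$, and $h_1=2$ on $\{\mathcal I=1\}$, $h_1=0$ on $\{\mathcal I=2\}$, and let $N(\tau,\sigma)=\mathbb E[\mathcal P(\tau,\sigma)]$. Then $$\sup_{\sigma\in\mathcal T^R(\mathcal F^2_t)}\inf_{\tau\in\mathcal T^R(\mathcal F^1_t)}N(\tau,\sigma)\le\tfrac12<\inf_{\tau\in\mathcal T^R(\mathcal F^1_t)}\sup_{\sigma\in\mathcal T^R(\mathcal F^2_t)}N(\tau,\sigma),$$ so the game has no value in randomised strategies.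
   Context: For a filtration $(\mathcal G_t)_{t\in[0,1]}\subseteq(\mathcal F_t)$ on a complete probability space supporting independent uniform random variables independent of $\mathcal F_1$, $\mathcal A^\circ(\mathcal G_t)$ is the set of $(\mathcal G_t)$-adapted processes $\rho$ with, for every $\omega$, $t\mapsto\rho_t(\omega)$ càdlàg, non-decreasing, $\rho_{0-}=0$, $\rho_1=1$. A $(\mathcal G_t)$-randomised stopping time is $\eta=\inf\{t\in[0,1]:\rho_t>Z\}$ with $\rho\in\mathcal A^\circ(\mathcal G_t)$ and $Z\sim U([0,1])$ independent of $\mathcal F_1$; $\mathcal T^R(\mathcal G_t)$ is the set of these, and the randomisation devices of $\tau$ and $\sigma$ are independent of each other and of $\mathcal F_1$. Here $\tau$ (chosen by the informed player, who knows $\mathcal I$) is the minimiser and $\sigma$ (chosen by the uninformed player) the maximiser. *)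

theory Defs
  imports "HOL-Probability.Probability"
begin

definition filtr1 :: "'a measure \<Rightarrow> ('a \<Rightarrow> nat) \<Rightarrow> real \<Rightarrow> 'a measure" where
  "filtr1 M I t = sigma (space M) ({I -` A \<inter> space M | A. True} \<union> null_sets M)"

definition filtr2 :: "'a measure \<Rightarrow> real \<Rightarrow> 'a measure" where
  "filtr2 M t = sigma (space M) ({{}, space M} \<union> null_sets M)"

text \<open>The class A-circ(G_t): G-adapted processes rho on [0,1], with every path
  cadlag, non-decreasing, rho(0-) = 0 (i.e. rho_0 >= 0) and rho_1 = 1.\<close>
definition gen_proc :: "'a measure \<Rightarrow> (real \<Rightarrow> 'a measure) \<Rightarrow> (real \<Rightarrow> 'a \<Rightarrow> real) \<Rightarrow> bool" where
  "gen_proc M G \<rho> \<longleftrightarrow>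
     (\<forall>t\<in>{0..1}. (\<lambda>\<omega>. \<rho> t \<omega>) \<in> borel_measurable (G t)) \<and>
     (\<forall>\<omega>\<in>space M.
        mono_on {0..1} (\<lambda>t. \<rho> t \<omega>) \<and>
        0 \<le> \<rho> 0 \<omega> \<and> \<rho> 1 \<omega> = 1 \<and>
        (\<forall>t\<in>{0..<1}. continuous (at_right t) (\<lambda>s. \<rho> s \<omega>)) \<and>
        (\<forall>t\<in>{0<..1}. \<exists>l. ((\<lambda>s. \<rho> s \<omega>) \<longlongrightarrow> l) (at_left t)))"

definition rst :: "(real \<Rightarrow> 'a \<Rightarrow> real) \<Rightarrow> 'a \<Rightarrow> real \<Rightarrow> real" where
  "rst \<rho> \<omega> z = Inf {t\<in>{0..1}. \<rho> t \<omega> > z}"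

definition payoff :: "('a \<Rightarrow> nat) \<Rightarrow> real \<Rightarrow> real \<Rightarrow> 'a \<Rightarrow> real" where
  "payoff I \<tau> \<sigma> \<omega> =
     (if \<tau> < \<sigma> then 1
      else if \<sigma> < \<tau> then \<sigma> / 2
      else (if \<tau> < 1 then 1 else if I \<omega> = 1 then 2 else 0))"

definition unif01 :: "real measure" where
  "unif01 = uniform_measure lborel {0..1}"

text \<open>N(tau,sigma) = E[P(tau,sigma)], where tau is generated by rho with device Z1,
  sigma by xi with device Z2, Z1, Z2 independent uniforms independent of F_1
  (realised on the product of M with two copies of U([0,1])).\<close>
definition N_val :: "'a measure \<Rightarrow> ('a \<Rightarrow> nat) \<Rightarrow> (real \<Rightarrow> 'a \<Rightarrow> real) \<Rightarrow> (real \<Rightarrow> 'a \<Rightarrow> real) \<Rightarrow> real" where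
  "N_val M I \<rho> \<xi> =
     (\<integral>\<omega>. (\<integral>z1. (\<integral>z2. payoff I (rst \<rho> \<omega> z1) (rst \<xi> \<omega> z2) \<omega> \<partial>unif01) \<partial>unif01) \<partial>M)"

end

theory Submission
  imports Defs
begin


definition rs :: "(real \<Rightarrow> real) \<Rightarrow> real \<Rightarrow> real" where
  "rs r z = Inf {t\<in>{0..1}. r t > z}"

definition pay :: "nat \<Rightarrow> real \<Rightarrow> real \<Rightarrow> real" where
  "pay k \<tau> \<sigma> = (if \<tau> < \<sigma> then 1 else if \<sigma> < \<tau> then \<sigma> / 2
      else (if \<tau> < 1 then 1 else if k = 1 then 2 else 0))"

definition pth :: "(real \<Rightarrow> real) \<Rightarrow> bool" where
  "pth r \<longleftrightarrow> mono_on {0..1} r \<and> 0 \<le> r 0 \<and> r 1 = 1"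

definition stp :: "real \<Rightarrow> real \<Rightarrow> real" where
  "stp c s = (if c \<le> s then 1 else 0)"

lemma rst_eq: "rst \<rho> \<omega> z = rs (\<lambda>t. \<rho> t \<omega>) z"
  by (simp add: rst_def rs_def)

lemma payoff_eq: "payoff I a b \<omega> = pay (I \<omega>) a b"
  by (simp add: payoff_def pay_def)

lemma pay_nonneg: "0 \<le> \<sigma> \<Longrightarrow> 0 \<le> pay k \<tau> \<sigma>"
  by (simp add: pay_def)

lemma pay_bound: "\<sigma> \<le> 1 \<Longrightarrow> pay k \<tau> \<sigma> \<le> 2"
  by (simp add: pay_def)

lemma pay_meas[measurable]:
  assumes [measurable]: "a \<in> borel_measurable N" "b \<in> borel_measurable N"
  shows "(\<lambda>z. pay k (a z) (b z)) \<in> borel_measurable N"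
  unfolding pay_def by measurable

lemma pth_range: "pth r \<Longrightarrow> t \<in> {0..1} \<Longrightarrow> 0 \<le> r t \<and> r t \<le> 1"
  unfolding pth_def mono_on_def
  by (metis atLeastAtMost_iff order.trans order_refl zero_le_one)

lemma rs_set_bdd: "bdd_below {t\<in>{0..1}. r t > z}"
  by (rule bdd_belowI[where m=0]) auto

lemma rs_set_ne: "pth r \<Longrightarrow> z < 1 \<Longrightarrow> {t\<in>{0..1}. r t > z} \<noteq> {}"
  unfolding pth_def by (rule ccontr) force

lemma rs_range: assumes "pth r" "z < 1" shows "0 \<le> rs r z \<and> rs r z \<le> 1"
proof
  have "1 \<in> {t\<in>{0..1}. r t > z}" using assms unfolding pth_def by auto
  then show "rs r z \<le> 1" unfolding rs_def by (intro cInf_lower rs_set_bdd)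
  show "0 \<le> rs r z" unfolding rs_def
    by (intro cInf_greatest rs_set_ne assms) auto
qed

lemma rs_le: "u \<in> {0..1} \<Longrightarrow> z < r u \<Longrightarrow> rs r z \<le> u"
  unfolding rs_def by (intro cInf_lower rs_set_bdd) auto

lemma rs_lt1: assumes "pth r" "z < 1" "rs r z < 1" shows "\<exists>u\<in>{0..<1}. z < r u"
proof -
  have "\<exists>x\<in>{t\<in>{0..1}. r t > z}. x < 1"
    using assms(3) cInf_less_iff[OF rs_set_ne[OF assms(1,2)] rs_set_bdd] unfolding rs_def by blast
  then show ?thesis by auto
qed

lemma rs_empty: assumes "pth r" "1 \<le> z" shows "rs r z = Inf {}"
proof -
  have "{t\<in>{0..1}. r t > z} = {}"
    using assms pth_range[OF assms(1)] by force
  then show ?thesis unfolding rs_def by (simp only:)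
qed

lemma rs_meas[measurable]: assumes "pth r" shows "rs r \<in> borel_measurable borel"
proof -
  define m where "m z = (if z < 1 then rs r z else 1)" for z
  have "mono m"
  proof (rule monoI)
    fix z z' :: real assume "z \<le> z'"
    show "m z \<le> m z'"
    proof (cases "z' < 1")
      case True
      then have "rs r z \<le> rs r z'" unfolding rs_def using \<open>z \<le> z'\<close>
        by (intro cInf_superset_mono rs_set_ne assms rs_set_bdd) auto
      then show ?thesis using True \<open>z \<le> z'\<close> by (simp add: m_def)
    next
      case False
      then show ?thesis using rs_range[OF assms] by (simp add: m_def)
    qed
  qed
  then have [measurable]: "m \<in> borel_measurable borel" by (rule borel_measurable_mono)
  have "rs r = (\<lambda>z. if z < 1 then m z else Inf {})"
    using rs_empty[OF assms] by (auto simp: m_def fun_eq_iff)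
  also have "\<dots> \<in> borel_measurable borel" by measurable
  finally show ?thesis .
qed

lemma stp_pth: "c \<in> {0..1} \<Longrightarrow> pth (stp c)"
  unfolding pth_def stp_def mono_on_def by auto

lemma rs_stp: assumes "c \<in> {0..1}" "0 \<le> z" "z < 1" shows "rs (stp c) z = c"
proof -
  have "{t\<in>{0..1}. stp c t > z} = {c..1}" using assms by (auto simp: stp_def)
  then show ?thesis using assms by (simp add: rs_def)
qed

lemma rs_cong: "(\<And>t. t \<in> {0..1} \<Longrightarrow> r t = r' t) \<Longrightarrow> rs r = rs r'"
  unfolding rs_def fun_eq_iff by (metis (mono_tags, lifting) Collect_cong)



abbreviation U where "U \<equiv> unif01"

lemma U_prob: "prob_space U"
  unfolding unif01_def by (rule prob_space_uniform_measure) auto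

lemma sets_U: "sets U = sets borel"
  by (simp add: unif01_def)

lemma meas_U: assumes "f \<in> borel_measurable borel" shows "f \<in> borel_measurable U"
  using assms measurable_cong_sets[OF sets_U refl, of borel] by blast

lemma AE_U: "AE z in U. 0 \<le> z \<and> z < 1"
  unfolding unif01_def
proof (rule AE_uniform_measureI)
  show "AE x in lborel. x \<in> {0..1::real} \<longrightarrow> 0 \<le> x \<and> x < 1"
    using AE_lborel_singleton[of "1::real"] by eventually_elim auto
qed auto

lemma measure_U: "B \<in> sets borel \<Longrightarrow> measure U B = measure lborel ({0..1} \<inter> B)"
  unfolding unif01_def by (subst measure_uniform_measure) auto

lemma int_le_const:
  fixes f :: "_ \<Rightarrow> real"
  assumes "prob_space P" "AE x in P. f x \<le> c" "0 \<le> c"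
  shows "integral\<^sup>L P f \<le> c"
proof -
  interpret prob_space P by fact
  have "integral\<^sup>L P f \<le> integral\<^sup>L P (\<lambda>_. c)"
    using assms(2,3) by (intro integral_mono_AE') auto
  then show ?thesis by (simp add: prob_space)
qed

lemma int_AE_const:
  fixes f :: "_ \<Rightarrow> real"
  assumes "prob_space P" "f \<in> borel_measurable P" "AE x in P. f x = c"
  shows "integral\<^sup>L P f = c"
proof -
  interpret prob_space P by fact
  have "integral\<^sup>L P f = integral\<^sup>L P (\<lambda>_. c)"
    using assms(2,3) by (intro integral_cong_AE) auto
  then show ?thesis by (simp add: prob_space)
qed

lemma int_AE_const_le:
  fixes f :: "_ \<Rightarrow> real"
  assumes "prob_space P" "AE x in P. f x = c" "0 \<le> c"
  shows "integral\<^sup>L P f \<le> c"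
proof (rule int_le_const[OF assms(1) _ assms(3)])
  show "AE x in P. f x \<le> c" using assms(2) by eventually_elim simp
qed

lemma intg_U:
  fixes f :: "real \<Rightarrow> real"
  assumes "f \<in> borel_measurable borel" "\<And>z. 0 \<le> z \<Longrightarrow> z < 1 \<Longrightarrow> \<bar>f z\<bar> \<le> B"
  shows "integrable U f"
proof -
  interpret prob_space U by (rule U_prob)
  show ?thesis
  proof (rule integrable_const_bound[where B=B])
    show "AE x in U. norm (f x) \<le> B" using AE_U by eventually_elim (use assms in auto)
  qed (rule meas_U[OF assms(1)])
qed

definition Hv :: "(real \<Rightarrow> real) \<Rightarrow> (real \<Rightarrow> real) \<Rightarrow> nat \<Rightarrow> real" where
  "Hv r x k = (\<integral>z1. (\<integral>z2. pay k (rs r z1) (rs x z2) \<partial>U) \<partial>U)"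

lemma Hv_sigma_pure:
  assumes "pth r" "c \<in> {0..1}"
  shows "Hv r (stp c) k = (\<integral>z1. pay k (rs r z1) c \<partial>U)"
  unfolding Hv_def
proof (rule Bochner_Integration.integral_cong[OF refl])
  fix z1
  have [measurable]: "rs (stp c) \<in> borel_measurable borel" by (rule rs_meas[OF stp_pth[OF assms(2)]])
  show "(\<integral>z2. pay k (rs r z1) (rs (stp c) z2) \<partial>U) = pay k (rs r z1) c"
  proof (rule int_AE_const[OF U_prob])
    show "(\<lambda>z2. pay k (rs r z1) (rs (stp c) z2)) \<in> borel_measurable U"
      by (rule meas_U) measurable
    show "AE z2 in U. pay k (rs r z1) (rs (stp c) z2) = pay k (rs r z1) c"
      using AE_U by eventually_elim (use assms(2) rs_stp in auto)
  qed
qed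

lemma Hv_tau_pure:
  assumes "pth x" "c \<in> {0..1}"
  shows "Hv (stp c) x k \<le> (\<integral>z2. pay k c (rs x z2) \<partial>U)"
  unfolding Hv_def
proof (rule int_AE_const_le[OF U_prob])
  show "AE z1 in U. (\<integral>z2. pay k (rs (stp c) z1) (rs x z2) \<partial>U) = (\<integral>z2. pay k c (rs x z2) \<partial>U)"
    using AE_U by eventually_elim (subst rs_stp, use assms in auto)
  show "0 \<le> (\<integral>z2. pay k c (rs x z2) \<partial>U)"
    by (rule integral_nonneg_AE) (use AE_U in \<open>eventually_elim, auto intro!: pay_nonneg rs_range[OF assms(1), THEN conjunct1]\<close>)
qed



lemma pay_rs_meas[measurable]: "pth r \<Longrightarrow> (\<lambda>z. pay k (rs r z) c) \<in> borel_measurable borel"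
  using rs_meas[of r] by measurable

lemma pay_rs_meas2[measurable]: "pth r \<Longrightarrow> (\<lambda>z. pay k c (rs r z)) \<in> borel_measurable borel"
  using rs_meas[of r] by measurable

lemma pay_rs_intg: "pth r \<Longrightarrow> c \<in> {0..1} \<Longrightarrow> integrable U (\<lambda>z. pay k (rs r z) c)"
  by (rule intg_U[where B=2]) (auto simp: pay_def)

lemma pay_rs_intg2: "pth r \<Longrightarrow> c \<in> {0..1} \<Longrightarrow> integrable U (\<lambda>z. pay k c (rs r z))"
  by (rule intg_U[where B=2], simp) (use rs_range[of r] in \<open>auto simp: pay_def\<close>)

lemma measure_U_Ico: "0 \<le> a \<Longrightarrow> a \<le> b \<Longrightarrow> b \<le> 1 \<Longrightarrow> measure U {a..<b} = b - a"
proof -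
  assume "0 \<le> a" "a \<le> b" "b \<le> 1"
  then have "{0..1} \<inter> {a..<b} = {a..<b}" by auto
  then show ?thesis using \<open>a \<le> b\<close> by (subst measure_U) auto
qed

lemma measure_U_lt: "0 \<le> v \<Longrightarrow> v \<le> 1 \<Longrightarrow> measure U {..<v} = v"
proof -
  assume "0 \<le> v" "v \<le> 1"
  then have "{0..1} \<inter> {..<v} = {0..<v}" by auto
  then show ?thesis using \<open>0 \<le> v\<close> by (subst measure_U) auto
qed

lemma measure_U_ge: "0 \<le> v \<Longrightarrow> v \<le> 1 \<Longrightarrow> measure U {v..} = 1 - v"
proof -
  assume "0 \<le> v" "v \<le> 1"
  then have "{0..1} \<inter> {v..} = {v..1}" by auto
  then show ?thesis using \<open>0 \<le> v\<close> \<open>v \<le> 1\<close> by (subst measure_U) auto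
qed

lemma space_U: "space U = UNIV"
  by (simp add: unif01_def)

lemma int_ind: "S \<in> sets borel \<Longrightarrow> (\<integral>z. c1 + c2 * indicator S z \<partial>U) = c1 + c2 * measure U S"
proof -
  assume S: "S \<in> sets borel"
  have "(\<integral>z. c1 + c2 * indicator S z \<partial>U) = (\<integral>z. c1 \<partial>U) + (\<integral>z. c2 * indicator S z \<partial>U)"
    by (rule Bochner_Integration.integral_add; rule intg_U[where B="\<bar>c1\<bar> + \<bar>c2\<bar>"]) (use S in \<open>auto simp: indicator_def\<close>)
  also have "\<dots> = c1 + c2 * measure U S"
    using prob_space.prob_space[OF U_prob] by (simp add: space_U)
  finally show ?thesis .
qed

lemma Sup_facts:
  assumes "pth x"
  shows "bdd_above (x ` {0..<1})" "Sup (x ` {0..<1}) \<le> 1" "\<And>u. u \<in> {0..<1} \<Longrightarrow> x u \<le> Sup (x ` {0..<1})"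
    "0 \<le> Sup (x ` {0..<1})"
proof -
  show b: "bdd_above (x ` {0..<1})" using pth_range[OF assms] by (intro bdd_aboveI[where M=1]) auto
  show "Sup (x ` {0..<1}) \<le> 1" using pth_range[OF assms] by (intro cSup_least) auto
  show u: "\<And>u. u \<in> {0..<1} \<Longrightarrow> x u \<le> Sup (x ` {0..<1})" using b by (intro cSup_upper) auto
  show "0 \<le> Sup (x ` {0..<1})" using u[of 0] pth_range[OF assms, of 0] by auto
qed

lemma D1:
  assumes x: "pth x" and t': "t' \<in> {0..<1}"
  shows "Hv (stp ((t'+1)/2)) x 1 + Hv (stp 1) x 2 \<le> 1 + (Sup (x ` {0..<1}) - x t')/2"
proof -
  define L where "L = Sup (x ` {0..<1})"
  define t where "t = (t'+1)/2"
  note SF = Sup_facts[OF x, folded L_def]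
  have t: "t \<in> {0..1}" "t' < t" "t < 1" using t' by (auto simp: t_def)
  have a: "0 \<le> x t'" "x t' \<le> L" "L \<le> 1" using SF t' pth_range[OF x, of t'] by auto
  have "Hv (stp t) x 1 + Hv (stp 1) x 2 \<le> (\<integral>z. pay 1 t (rs x z) \<partial>U) + (\<integral>z. pay 2 1 (rs x z) \<partial>U)"
    using Hv_tau_pure[OF x t(1), of 1] Hv_tau_pure[OF x, of 1 2] by auto
  also have "\<dots> = (\<integral>z. pay 1 t (rs x z) + pay 2 1 (rs x z) \<partial>U)"
    by (rule Bochner_Integration.integral_add[symmetric]) (use t in \<open>auto intro!: pay_rs_intg2 x\<close>)
  also have "\<dots> \<le> (\<integral>z. 1 + (1/2) * indicator {x t'..<L} z \<partial>U)"
  proof (rule integral_mono_AE)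
    show "integrable U (\<lambda>z. pay 1 t (rs x z) + pay 2 1 (rs x z))"
      using t by (auto intro!: pay_rs_intg2 x)
    show "integrable U (\<lambda>z. 1 + (1/2) * indicator {x t'..<L} z :: real)"
      by (rule intg_U[where B=2]) (auto simp: indicator_def)
    show "AE z in U. pay 1 t (rs x z) + pay 2 1 (rs x z) \<le> 1 + (1/2) * indicator {x t'..<L} z"
      using AE_U
    proof eventually_elim
      case (elim z)
      define \<sigma> where "\<sigma> = rs x z"
      have s01: "0 \<le> \<sigma>" "\<sigma> \<le> 1" using rs_range[OF x, of z] elim by (auto simp: \<sigma>_def)
      have A: "z < x t' \<Longrightarrow> \<sigma> \<le> t'" unfolding \<sigma>_def using t' by (intro rs_le) auto
      have B: "\<sigma> < 1 \<Longrightarrow> z < L"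
      proof -
        assume "\<sigma> < 1"
        then obtain u where "u \<in> {0..<1}" "z < x u" using rs_lt1[OF x, of z] elim by (auto simp: \<sigma>_def)
        then show "z < L" using SF(3)[of u] by auto
      qed
      show ?case
        unfolding \<sigma>_def[symmetric]
        using A B s01 t by (cases "z < x t'"; cases "\<sigma> < 1") (auto simp: pay_def indicator_def)
    qed
  qed
  also have "\<dots> = 1 + (L - x t')/2"
    using a by (subst int_ind) (auto simp: measure_U_Ico)
  finally show ?thesis by (simp add: L_def t_def)
qed



lemma D2:
  assumes r1: "pth r1" and r2: "pth r2" and s: "s \<in> {0..<1}"
  shows "s + r1 s / 2 \<le> Hv r1 (stp s) 1 + Hv r2 (stp s) 2"
proof -
  have s1: "s \<in> {0..1}" using s by auto
  have v: "0 \<le> r1 s" "r1 s \<le> 1" using pth_range[OF r1 s1] by auto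
  have "s/2 + r1 s/2 = (\<integral>z. s/2 + (1/2) * indicator {..<r1 s} z \<partial>U)"
    using v by (subst int_ind) (auto simp: measure_U_lt)
  also have "\<dots> \<le> (\<integral>z. pay 1 (rs r1 z) s \<partial>U)"
  proof (rule integral_mono_AE)
    show "integrable U (\<lambda>z. s/2 + (1/2) * indicator {..<r1 s} z :: real)"
      by (rule intg_U[where B=2]) (use s in \<open>auto simp: indicator_def\<close>)
    show "integrable U (\<lambda>z. pay 1 (rs r1 z) s)" by (rule pay_rs_intg[OF r1 s1])
    show "AE z in U. s/2 + (1/2) * indicator {..<r1 s} z \<le> pay 1 (rs r1 z) s"
      using AE_U
    proof eventually_elim
      case (elim z)
      have A: "z < r1 s \<Longrightarrow> rs r1 z \<le> s" using s1 by (intro rs_le) auto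
      show ?case using A s by (cases "z < r1 s") (auto simp: pay_def indicator_def)
    qed
  qed
  also have "\<dots> = Hv r1 (stp s) 1" by (rule Hv_sigma_pure[OF r1 s1, symmetric])
  finally have 1: "s/2 + r1 s/2 \<le> Hv r1 (stp s) 1" .
  have "s/2 = (\<integral>z. s/2 \<partial>U)" using prob_space.prob_space[OF U_prob] by (simp add: space_U)
  also have "\<dots> \<le> (\<integral>z. pay 2 (rs r2 z) s \<partial>U)"
  proof (rule integral_mono_AE)
    show "integrable U (\<lambda>z. pay 2 (rs r2 z) s)" by (rule pay_rs_intg[OF r2 s1])
    show "AE z in U. s/2 \<le> pay 2 (rs r2 z) s"
      using AE_U by eventually_elim (use s in \<open>auto simp: pay_def\<close>)
  qed (rule intg_U[where B=1], use s in auto)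
  also have "\<dots> = Hv r2 (stp s) 2" by (rule Hv_sigma_pure[OF r2 s1, symmetric])
  finally show ?thesis using 1 by simp
qed

lemma D3:
  assumes r1: "pth r1" and r2: "pth r2"
  shows "2 - Sup (r1 ` {0..<1}) \<le> Hv r1 (stp 1) 1 + Hv r2 (stp 1) 2"
proof -
  define L where "L = Sup (r1 ` {0..<1})"
  note SF = Sup_facts[OF r1, folded L_def]
  have o: "(1::real) \<in> {0..1}" by auto
  have "2 - L = (\<integral>z. 1 + 1 * indicator {L..} z \<partial>U)"
    using SF by (subst int_ind) (auto simp: measure_U_ge)
  also have "\<dots> \<le> (\<integral>z. pay 1 (rs r1 z) 1 \<partial>U)"
  proof (rule integral_mono_AE)
    show "integrable U (\<lambda>z. 1 + 1 * indicator {L..} z :: real)"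
      by (rule intg_U[where B=2]) (auto simp: indicator_def)
    show "integrable U (\<lambda>z. pay 1 (rs r1 z) 1)" by (rule pay_rs_intg[OF r1 o])
    show "AE z in U. 1 + 1 * indicator {L..} z \<le> pay 1 (rs r1 z) 1"
      using AE_U
    proof eventually_elim
      case (elim z)
      have R: "0 \<le> rs r1 z" "rs r1 z \<le> 1" using rs_range[OF r1, of z] elim by auto
      have B: "rs r1 z < 1 \<Longrightarrow> z < L"
      proof -
        assume "rs r1 z < 1"
        then obtain u where "u \<in> {0..<1}" "z < r1 u" using rs_lt1[OF r1, of z] elim by auto
        then show "z < L" using SF(3)[of u] by auto
      qed
      show ?case using B R by (cases "rs r1 z < 1") (auto simp: pay_def indicator_def)
    qed
  qed
  also have "\<dots> = Hv r1 (stp 1) 1" by (rule Hv_sigma_pure[OF r1 o, symmetric])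
  finally have 1: "2 - L \<le> Hv r1 (stp 1) 1" .
  have "0 \<le> Hv r2 (stp 1) 2"
    unfolding Hv_sigma_pure[OF r2 o] by (rule Bochner_Integration.integral_nonneg) (simp add: pay_nonneg)
  then show ?thesis using 1 by (simp add: L_def)
qed

lemma D23:
  assumes r1: "pth r1" and r2: "pth r2"
  shows "\<exists>c\<in>{0..1}. 23/20 \<le> Hv r1 (stp c) 1 + Hv r2 (stp c) 2"
proof (cases "Sup (r1 ` {0..<1}) \<le> 1/2")
  case True
  then show ?thesis using D3[OF r1 r2] by (intro bexI[of _ 1]) auto
next
  case False
  define L where "L = Sup (r1 ` {0..<1})"
  have "L - 1/10 < L" by simp
  then obtain y where y: "y \<in> r1 ` {0..<1}" "L - 1/10 < y"
    unfolding L_def by (rule less_cSupE) auto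
  then obtain u where u: "u \<in> {0..<1}" "L - 1/10 < r1 u" by auto
  define s where "s = max u (19/20)"
  have s: "s \<in> {0..<1}" "u \<le> s" "19/20 \<le> s" using u by (auto simp: s_def)
  have "r1 u \<le> r1 s" using r1 u s unfolding pth_def mono_on_def by auto
  then have "23/20 \<le> s + r1 s / 2" using False u s by (simp add: L_def)
  then show ?thesis using D2[OF r1 r2 s(1)] s by (intro bexI[of _ s]) auto
qed



lemma sig_split:
  assumes G: "G \<subseteq> sets M" and E: "E \<in> sets M"
    and P: "\<And>g. g \<in> G \<Longrightarrow> g \<inter> E \<in> null_sets M \<or> E - g \<in> null_sets M"
    and S: "S \<in> sigma_sets (space M) G"
  shows "S \<inter> E \<in> null_sets M \<or> E - S \<in> null_sets M"
proof -
  have Esp: "E \<subseteq> space M" using E sets.sets_into_space by auto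
  have "S \<in> sets M \<and> (S \<inter> E \<in> null_sets M \<or> E - S \<in> null_sets M)" using S
  proof induct
    case (Basic a) then show ?case using G P by blast
  next
    case Empty show ?case by simp
  next
    case (Compl a)
    have 1: "(space M - a) \<inter> E = E - a" using Esp by auto
    have 2: "E - (space M - a) = a \<inter> E" using Esp by auto
    have "space M - a \<in> sets M" using Compl by blast
    then show ?case using Compl(2) unfolding 1 2 by (metis Int_commute)
  next
    case (Union A)
    have mA: "\<And>i. A i \<in> sets M" using Union(2) by blast
    have mU: "(\<Union>i. A i) \<in> sets M" using mA by auto
    show ?case
    proof (cases "\<forall>i. A i \<inter> E \<in> null_sets M")
      case True
      then have "(\<Union>i. A i \<inter> E) \<in> null_sets M" by (intro null_sets_UN) auto
      moreover have "(\<Union>i. A i) \<inter> E = (\<Union>i. A i \<inter> E)" by auto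
      ultimately have "(\<Union>i. A i) \<inter> E \<in> null_sets M" by (simp only:)
      then show ?thesis using mU by blast
    next
      case False
      then obtain i where "A i \<inter> E \<notin> null_sets M" by blast
      then have "E - A i \<in> null_sets M" using Union(2)[of i] by blast
      then have "E - (\<Union>i. A i) \<in> null_sets M"
        by (rule null_sets_subset) (use mU E in blast)+
      then show ?thesis using mU by blast
    qed
  qed
  then show ?thesis by auto
qed

lemma real_eq_rats:
  fixes a b :: real
  assumes "\<forall>q\<in>\<rat>. a \<le> q \<longleftrightarrow> b \<le> q" shows "a = b"
proof (rule ccontr)
  assume "a \<noteq> b"
  then consider "a < b" | "b < a" by linarith
  then show False
  proof cases
    case 1
    then obtain q where "q \<in> \<rat>" "a < q" "q < b" using Rats_dense_in_real by blast
    then show False using assms by auto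
  next
    case 2
    then obtain q where "q \<in> \<rat>" "b < q" "q < a" using Rats_dense_in_real by blast
    then show False using assms by auto
  qed
qed

lemma ae_rat:
  fixes f :: "'a \<Rightarrow> real"
  assumes Nsp: "space N = space M" and Nsets: "\<forall>S\<in>sets N. S \<inter> E \<in> null_sets M \<or> E - S \<in> null_sets M"
    and f: "f \<in> borel_measurable N"
  shows "\<exists>D. AE \<omega> in M. \<omega> \<in> E \<longrightarrow> (\<forall>q\<in>\<rat>. f \<omega> \<le> q \<longleftrightarrow> q \<in> D)"
proof -
  define D where "D = {q::real. E - {\<omega>\<in>space M. f \<omega> \<le> q} \<in> null_sets M}"
  have "\<forall>q\<in>\<rat>. AE \<omega> in M. \<omega> \<in> E \<longrightarrow> (f \<omega> \<le> q \<longleftrightarrow> q \<in> D)"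
  proof
    fix q :: real
    have "f -` {..q} \<inter> space N \<in> sets N" using f by (rule measurable_sets) simp
    moreover have "f -` {..q} \<inter> space N = {\<omega>\<in>space N. f \<omega> \<le> q}" by auto
    ultimately have "{\<omega>\<in>space N. f \<omega> \<le> q} \<in> sets N" by simp
    then have Sq: "{\<omega>\<in>space M. f \<omega> \<le> q} \<in> sets N" using Nsp by simp
    show "AE \<omega> in M. \<omega> \<in> E \<longrightarrow> (f \<omega> \<le> q \<longleftrightarrow> q \<in> D)"
    proof (cases "q \<in> D")
      case True
      then have "AE \<omega> in M. \<omega> \<notin> E - {\<omega>\<in>space M. f \<omega> \<le> q}" unfolding D_def by (intro AE_not_in) simp
      then show ?thesis using AE_space by eventually_elim (use True in auto)
    next
      case False
      then have "{\<omega>\<in>space M. f \<omega> \<le> q} \<inter> E \<in> null_sets M" using Nsets Sq unfolding D_def by auto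
      then have "AE \<omega> in M. \<omega> \<notin> {\<omega>\<in>space M. f \<omega> \<le> q} \<inter> E" by (rule AE_not_in)
      then show ?thesis using AE_space by eventually_elim (use False in auto)
    qed
  qed
  then have "AE \<omega> in M. \<forall>q\<in>\<rat>. \<omega> \<in> E \<longrightarrow> (f \<omega> \<le> q \<longleftrightarrow> q \<in> D)"
    by (subst AE_ball_countable) (auto simp: countable_rat)
  then have "AE \<omega> in M. \<omega> \<in> E \<longrightarrow> (\<forall>q\<in>\<rat>. f \<omega> \<le> q \<longleftrightarrow> q \<in> D)" by eventually_elim blast
  then show ?thesis by blast
qed

lemma ae_rat_fam:
  fixes f :: "'t \<Rightarrow> 'a \<Rightarrow> real"
  assumes Nsp: "space N = space M" and Nsets: "\<forall>S\<in>sets N. S \<inter> E \<in> null_sets M \<or> E - S \<in> null_sets M"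
    and f: "\<And>t. t \<in> T \<Longrightarrow> f t \<in> borel_measurable N" and T: "countable T"
  shows "\<exists>D. AE \<omega> in M. \<omega> \<in> E \<longrightarrow> (\<forall>t\<in>T. \<forall>q\<in>\<rat>. f t \<omega> \<le> q \<longleftrightarrow> q \<in> D t)"
proof -
  have "\<forall>t\<in>T. \<exists>D. AE \<omega> in M. \<omega> \<in> E \<longrightarrow> (\<forall>q\<in>\<rat>. f t \<omega> \<le> q \<longleftrightarrow> q \<in> D)"
    using ae_rat[OF Nsp Nsets f] by blast
  from bchoice[OF this] obtain D where D: "\<forall>t\<in>T. AE \<omega> in M. \<omega> \<in> E \<longrightarrow> (\<forall>q\<in>\<rat>. f t \<omega> \<le> q \<longleftrightarrow> q \<in> D t)"
    by blast
  then have "AE \<omega> in M. \<forall>t\<in>T. \<omega> \<in> E \<longrightarrow> (\<forall>q\<in>\<rat>. f t \<omega> \<le> q \<longleftrightarrow> q \<in> D t)"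
    by (subst AE_ball_countable[OF T])
  then have "AE \<omega> in M. \<omega> \<in> E \<longrightarrow> (\<forall>t\<in>T. \<forall>q\<in>\<rat>. f t \<omega> \<le> q \<longleftrightarrow> q \<in> D t)" by eventually_elim blast
  then show ?thesis by blast
qed

lemma pick_point:
  assumes "AE \<omega> in M. \<omega> \<in> E \<longrightarrow> P \<omega>" "E \<in> sets M" "emeasure M E \<noteq> 0"
  shows "\<exists>\<omega>\<in>E. P \<omega>"
proof (rule ccontr)
  assume nP: "\<not> (\<exists>\<omega>\<in>E. P \<omega>)"
  have "AE \<omega> in M. \<omega> \<notin> E" using assms(1) by eventually_elim (use nP in auto)
  then have "E \<in> null_sets M" using AE_iff_null_sets[OF assms(2)] by simp
  then show False using assms(3) by auto
qed

lemma rc_ext: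
  fixes f g :: "real \<Rightarrow> real"
  assumes "continuous (at_right t) f" "continuous (at_right t) g" "t \<in> {0..<1}"
    "\<And>q. q \<in> \<rat> \<Longrightarrow> q \<in> {0..1} \<Longrightarrow> f q = g q"
  shows "f t = g t"
proof (rule ccontr)
  assume ne: "f t \<noteq> g t"
  have "continuous (at_right t) (\<lambda>s. f s - g s)" using assms(1,2) by (rule continuous_diff)
  then have "((\<lambda>s. f s - g s) \<longlongrightarrow> f t - g t) (at_right t)" by (simp add: continuous_within)
  then have "eventually (\<lambda>s. f s - g s \<noteq> 0) (at_right t)"
    by (rule tendsto_imp_eventually_ne) (use ne in auto)
  then obtain b where b: "b > t" "\<And>s. s > t \<Longrightarrow> s < b \<Longrightarrow> f s - g s \<noteq> 0"
    by (auto simp: eventually_at_right_field)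
  have "t < min b 1" using b assms(3) by auto
  then obtain q where "q \<in> \<rat>" "t < q" "q < min b 1" using Rats_dense_in_real by blast
  then show False using b(2)[of q] assms(3) assms(4)[of q] by auto
qed



lemma filtr1_facts:
  assumes I: "I \<in> measurable M (count_space UNIV)"
  shows "space (filtr1 M I t) = space M" "sets (filtr1 M I t) \<subseteq> sets M"
    "\<And>S. S \<in> sets (filtr1 M I t) \<Longrightarrow> S \<inter> {\<omega>\<in>space M. I \<omega> = k} \<in> null_sets M \<or> {\<omega>\<in>space M. I \<omega> = k} - S \<in> null_sets M"
proof -
  let ?G = "{I -` A \<inter> space M | A. True} \<union> null_sets M"
  have G: "?G \<subseteq> sets M" using measurable_sets[OF I] by auto
  have GP: "?G \<subseteq> Pow (space M)" using G sets.sets_into_space by blast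
  have S: "sets (filtr1 M I t) = sigma_sets (space M) ?G" unfolding filtr1_def by (rule sets_measure_of[OF GP])
  show "space (filtr1 M I t) = space M" unfolding filtr1_def by (rule space_measure_of[OF GP])
  show "sets (filtr1 M I t) \<subseteq> sets M" unfolding S by (rule sets.sigma_sets_subset[OF G])
  have Em: "{\<omega>\<in>space M. I \<omega> = k} \<in> sets M" using I by measurable
  fix S assume "S \<in> sets (filtr1 M I t)"
  then have S': "S \<in> sigma_sets (space M) ?G" using S by simp
  show "S \<inter> {\<omega>\<in>space M. I \<omega> = k} \<in> null_sets M \<or> {\<omega>\<in>space M. I \<omega> = k} - S \<in> null_sets M"
  proof (rule sig_split[OF G Em _ S'])
    fix g assume g: "g \<in> ?G"
    show "g \<inter> {\<omega>\<in>space M. I \<omega> = k} \<in> null_sets M \<or> {\<omega>\<in>space M. I \<omega> = k} - g \<in> null_sets M"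
    proof (cases "g \<in> null_sets M")
      case True
      then have "g \<inter> {\<omega>\<in>space M. I \<omega> = k} \<in> null_sets M"
        by (rule null_sets_subset) (use True Em in auto)
      then show ?thesis by blast
    next
      case False
      then obtain A where gA: "g = I -` A \<inter> space M" using g by blast
      show ?thesis
      proof (cases "k \<in> A")
        case True
        then have h: "{\<omega>\<in>space M. I \<omega> = k} - g = {}" using gA by auto
        show ?thesis unfolding h by simp
      next
        case False
        then have h: "g \<inter> {\<omega>\<in>space M. I \<omega> = k} = {}" using gA by auto
        show ?thesis unfolding h by simp
      qed
    qed
  qed
qed

lemma filtr2_facts:
  shows "space (filtr2 M t) = space M" "sets (filtr2 M t) \<subseteq> sets M"
    "\<And>S. S \<in> sets (filtr2 M t) \<Longrightarrow> S \<inter> space M \<in> null_sets M \<or> space M - S \<in> null_sets M"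
proof -
  let ?G = "{{}, space M} \<union> null_sets M"
  have G: "?G \<subseteq> sets M" by auto
  have GP: "?G \<subseteq> Pow (space M)" using G sets.sets_into_space by blast
  have S: "sets (filtr2 M t) = sigma_sets (space M) ?G" unfolding filtr2_def by (rule sets_measure_of[OF GP])
  show "space (filtr2 M t) = space M" unfolding filtr2_def by (rule space_measure_of[OF GP])
  show "sets (filtr2 M t) \<subseteq> sets M" unfolding S by (rule sets.sigma_sets_subset[OF G])
  fix S assume "S \<in> sets (filtr2 M t)"
  then have S': "S \<in> sigma_sets (space M) ?G" using S by simp
  show "S \<inter> space M \<in> null_sets M \<or> space M - S \<in> null_sets M"
  proof (rule sig_split[OF G sets.top _ S'])
    fix g assume g: "g \<in> ?G"
    show "g \<inter> space M \<in> null_sets M \<or> space M - g \<in> null_sets M"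
    proof (cases "g \<in> null_sets M")
      case True
      then have "g \<inter> space M \<in> null_sets M"
        by (rule null_sets_subset) (use True in auto)
      then show ?thesis by blast
    next
      case False
      then show ?thesis using g by auto
    qed
  qed
qed

lemma gpD:
  assumes "gen_proc M G \<rho>" "\<omega> \<in> space M"
  shows "mono_on {0..1} (\<lambda>t. \<rho> t \<omega>)" "0 \<le> \<rho> 0 \<omega>" "\<rho> 1 \<omega> = 1"
    "\<And>t. t \<in> {0..<1} \<Longrightarrow> continuous (at_right t) (\<lambda>s. \<rho> s \<omega>)"
proof -
  have H: "mono_on {0..1} (\<lambda>t. \<rho> t \<omega>) \<and> 0 \<le> \<rho> 0 \<omega> \<and> \<rho> 1 \<omega> = 1 \<and>
        (\<forall>t\<in>{0..<1}. continuous (at_right t) (\<lambda>s. \<rho> s \<omega>)) \<and>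
        (\<forall>t\<in>{0<..1}. \<exists>l. ((\<lambda>s. \<rho> s \<omega>) \<longlongrightarrow> l) (at_left t))"
    by (rule bspec[OF conjunct2[OF assms(1)[unfolded gen_proc_def]] assms(2)])
  show "mono_on {0..1} (\<lambda>t. \<rho> t \<omega>)" using H by (rule conjunct1)
  show "0 \<le> \<rho> 0 \<omega>" using H[THEN conjunct2] by (rule conjunct1)
  show "\<rho> 1 \<omega> = 1" using H[THEN conjunct2, THEN conjunct2] by (rule conjunct1)
  show "\<And>t. t \<in> {0..<1} \<Longrightarrow> continuous (at_right t) (\<lambda>s. \<rho> s \<omega>)"
    using H[THEN conjunct2, THEN conjunct2, THEN conjunct2, THEN conjunct1] by (rule bspec)
qed

lemma gp_pth: assumes "gen_proc M G \<rho>" "\<omega> \<in> space M" shows "pth (\<lambda>t. \<rho> t \<omega>)"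
  unfolding pth_def using gpD(1-3)[OF assms] by blast

lemma agree:
  assumes gp: "gen_proc M G \<rho>" and om: "\<omega> \<in> space M" "\<omega>0 \<in> space M"
    and q: "\<forall>t\<in>\<rat> \<inter> {0..1}. \<rho> t \<omega> = \<rho> t \<omega>0"
  shows "\<forall>t\<in>{0..1}. \<rho> t \<omega> = \<rho> t \<omega>0"
proof
  fix t :: real assume t: "t \<in> {0..1}"
  show "\<rho> t \<omega> = \<rho> t \<omega>0"
  proof (cases "t = 1")
    case True then show ?thesis using gpD(3)[OF gp om(1)] gpD(3)[OF gp om(2)] by simp
  next
    case False
    then have t': "t \<in> {0..<1}" using t by auto
    show ?thesis
      by (rule rc_ext[OF gpD(4)[OF gp om(1) t'] gpD(4)[OF gp om(2) t'] t']) (use q in blast)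
  qed
qed

lemma const_on:
  assumes gp: "gen_proc M G \<rho>" and Gt: "\<And>t. G t = N" and Nsp: "space N = space M"
    and Nsets: "\<forall>S\<in>sets N. S \<inter> E \<in> null_sets M \<or> E - S \<in> null_sets M"
    and E: "E \<in> sets M" "emeasure M E \<noteq> 0"
  shows "\<exists>\<omega>0\<in>E. \<omega>0 \<in> space M \<and> (AE \<omega> in M. \<omega> \<in> E \<longrightarrow> (\<forall>t\<in>{0..1}. \<rho> t \<omega> = \<rho> t \<omega>0))"
proof -
  let ?T = "\<rat> \<inter> {0..1::real}"
  have T: "countable ?T" by (intro countable_Int1 countable_rat)
  have meas: "\<And>t. t \<in> ?T \<Longrightarrow> (\<lambda>\<omega>. \<rho> t \<omega>) \<in> borel_measurable N"
  proof -
    fix t assume "t \<in> ?T"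
    then have "t \<in> {0..1}" by blast
    then have "(\<lambda>\<omega>. \<rho> t \<omega>) \<in> borel_measurable (G t)" using gp unfolding gen_proc_def by blast
    then show "(\<lambda>\<omega>. \<rho> t \<omega>) \<in> borel_measurable N" unfolding Gt .
  qed
  have "\<exists>D. AE \<omega> in M. \<omega> \<in> E \<longrightarrow> (\<forall>t\<in>?T. \<forall>q\<in>\<rat>. \<rho> t \<omega> \<le> q \<longleftrightarrow> q \<in> D t)"
    by (rule ae_rat_fam[OF Nsp Nsets]) (erule meas, rule T)
  then obtain D where D: "AE \<omega> in M. \<omega> \<in> E \<longrightarrow> (\<forall>t\<in>?T. \<forall>q\<in>\<rat>. \<rho> t \<omega> \<le> q \<longleftrightarrow> q \<in> D t)"
    by (elim exE)
  have "AE \<omega> in M. \<omega> \<in> E \<longrightarrow> (\<omega> \<in> space M \<and> (\<forall>t\<in>?T. \<forall>q\<in>\<rat>. \<rho> t \<omega> \<le> q \<longleftrightarrow> q \<in> D t))"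
    using D AE_space by eventually_elim (intro impI conjI, assumption, erule mp)
  note AE2 = this
  obtain \<omega>0 where w0: "\<omega>0 \<in> E" "\<omega>0 \<in> space M" "\<forall>t\<in>?T. \<forall>q\<in>\<rat>. \<rho> t \<omega>0 \<le> q \<longleftrightarrow> q \<in> D t"
    using pick_point[OF AE2 E] by (elim bexE conjE) 
  have "AE \<omega> in M. \<omega> \<in> E \<longrightarrow> (\<forall>t\<in>{0..1}. \<rho> t \<omega> = \<rho> t \<omega>0)"
    using AE2
  proof eventually_elim
    case (elim \<omega>)
    show ?case
    proof
      assume "\<omega> \<in> E"
      then have om: "\<omega> \<in> space M" "\<forall>t\<in>?T. \<forall>q\<in>\<rat>. \<rho> t \<omega> \<le> q \<longleftrightarrow> q \<in> D t" using elim by simp_all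
      have "\<forall>t\<in>?T. \<rho> t \<omega> = \<rho> t \<omega>0"
      proof
        fix t assume "t \<in> ?T"
        then show "\<rho> t \<omega> = \<rho> t \<omega>0" using bspec[OF om(2)] bspec[OF w0(3)] by (intro real_eq_rats) simp
      qed
      then show "\<forall>t\<in>{0..1}. \<rho> t \<omega> = \<rho> t \<omega>0" by (rule agree[OF gp om(1) w0(2)])
    qed
  qed
  then show ?thesis using w0(1,2) by (intro bexI[of _ \<omega>0] conjI)
qed


lemma XI:
  assumes M: "prob_space M" and gp: "gen_proc M (filtr2 M) \<xi>"
  shows "\<exists>x. pth x \<and> (AE \<omega> in M. \<forall>t\<in>{0..1}. \<xi> t \<omega> = x t)"
proof -
  interpret prob_space M by fact
  have Gt: "\<And>t. filtr2 M t = filtr2 M 0" by (simp add: filtr2_def)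
  have Ns: "\<forall>S\<in>sets (filtr2 M 0). S \<inter> space M \<in> null_sets M \<or> space M - S \<in> null_sets M"
    using filtr2_facts(3) by blast
  have e: "emeasure M (space M) \<noteq> 0" using emeasure_space_1 by simp
  obtain \<omega>0 where "\<omega>0 \<in> space M" and w': "\<omega>0 \<in> space M \<and> (AE \<omega> in M. \<omega> \<in> space M \<longrightarrow> (\<forall>t\<in>{0..1}. \<xi> t \<omega> = \<xi> t \<omega>0))"
    using const_on[OF gp Gt filtr2_facts(1) Ns sets.top e] ..
  note w = conjunct1[OF w'] conjunct2[OF w']
  have "AE \<omega> in M. \<forall>t\<in>{0..1}. \<xi> t \<omega> = \<xi> t \<omega>0" using w(2) AE_space by eventually_elim auto
  then show ?thesis using gp_pth[OF gp w(1)] by blast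
qed


lemma RHO:
  assumes gp: "gen_proc M (filtr1 M I) \<rho>" and I: "I \<in> measurable M (count_space UNIV)"
    and m: "measure M {\<omega>\<in>space M. I \<omega> = k} \<noteq> 0"
  shows "\<exists>r. pth r \<and> (AE \<omega> in M. I \<omega> = k \<longrightarrow> (\<forall>t\<in>{0..1}. \<rho> t \<omega> = r t))"
proof -
  have Gt: "\<And>t. filtr1 M I t = filtr1 M I 0" by (simp add: filtr1_def)
  have Ns: "\<forall>S\<in>sets (filtr1 M I 0). S \<inter> {\<omega>\<in>space M. I \<omega> = k} \<in> null_sets M \<or> {\<omega>\<in>space M. I \<omega> = k} - S \<in> null_sets M"
    using filtr1_facts(3)[OF I] by blast
  have Em: "{\<omega>\<in>space M. I \<omega> = k} \<in> sets M" using I by measurable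
  have e: "emeasure M {\<omega>\<in>space M. I \<omega> = k} \<noteq> 0"
  proof
    assume "emeasure M {\<omega>\<in>space M. I \<omega> = k} = 0"
    then have "measure M {\<omega>\<in>space M. I \<omega> = k} = 0" by (simp add: measure_def)
    with m show False by simp
  qed
  obtain \<omega>0 where "\<omega>0 \<in> {\<omega>\<in>space M. I \<omega> = k}" and w': "\<omega>0 \<in> space M \<and> (AE \<omega> in M. \<omega> \<in> {\<omega>\<in>space M. I \<omega> = k} \<longrightarrow> (\<forall>t\<in>{0..1}. \<rho> t \<omega> = \<rho> t \<omega>0))"
    using const_on[OF gp Gt filtr1_facts(1)[OF I] Ns Em e] ..
  note w = conjunct1[OF w'] conjunct2[OF w']
  have "AE \<omega> in M. I \<omega> = k \<longrightarrow> (\<forall>t\<in>{0..1}. \<rho> t \<omega> = \<rho> t \<omega>0)" using w(2) AE_space by eventually_elim auto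
  then show ?thesis using gp_pth[OF gp w(1)] by blast
qed



lemma complete_meas:
  fixes f g :: "'a \<Rightarrow> real"
  assumes C: "complete_measure M" and g: "g \<in> borel_measurable M" and ae: "AE \<omega> in M. f \<omega> = g \<omega>"
  shows "f \<in> borel_measurable M"
proof (rule measurableI)
  show "\<And>x. x \<in> space M \<Longrightarrow> f x \<in> space borel" by simp
  fix A :: "real set" assume A: "A \<in> sets borel"
  have 1: "g -` A \<inter> space M \<in> sets M" using g A by (rule measurable_sets)
  have 2: "AE x in M. x \<in> g -` A \<inter> space M \<longleftrightarrow> x \<in> f -` A \<inter> space M"
    using ae AE_space by eventually_elim auto
  show "f -` A \<inter> space M \<in> sets M"
    by (rule complete_measure.in_sets_AE[OF C 2 1]) auto
qed

lemma Hv_cong: "rs r = rs r' \<Longrightarrow> rs x = rs x' \<Longrightarrow> Hv r x k = Hv r' x' k"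
  by (simp add: Hv_def)

lemma N_form: "N_val M I \<rho> \<xi> = (\<integral>\<omega>. Hv (\<lambda>t. \<rho> t \<omega>) (\<lambda>t. \<xi> t \<omega>) (I \<omega>) \<partial>M)"
  unfolding N_val_def Hv_def rst_eq payoff_eq by simp

lemma Hv_bounds:
  assumes r: "pth r" and x: "pth x"
  shows "0 \<le> Hv r x k \<and> Hv r x k \<le> 2"
proof -
  have inner: "0 \<le> (\<integral>z2. pay k a (rs x z2) \<partial>U) \<and> (\<integral>z2. pay k a (rs x z2) \<partial>U) \<le> 2" for a
  proof
    show "0 \<le> (\<integral>z2. pay k a (rs x z2) \<partial>U)"
      by (rule integral_nonneg_AE) (use AE_U in \<open>eventually_elim, auto intro!: pay_nonneg rs_range[OF x, THEN conjunct1]\<close>)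
    show "(\<integral>z2. pay k a (rs x z2) \<partial>U) \<le> 2"
      by (rule int_le_const[OF U_prob]) (use AE_U in \<open>eventually_elim, auto intro!: pay_bound rs_range[OF x, THEN conjunct2]\<close>)
  qed
  show ?thesis unfolding Hv_def
  proof
    show "0 \<le> (\<integral>z1. (\<integral>z2. pay k (rs r z1) (rs x z2) \<partial>U) \<partial>U)"
      by (rule Bochner_Integration.integral_nonneg) (use inner in blast)
    show "(\<integral>z1. (\<integral>z2. pay k (rs r z1) (rs x z2) \<partial>U) \<partial>U) \<le> 2"
      by (rule int_le_const[OF U_prob]) (use inner in auto)
  qed
qed

lemma N_bounds:
  assumes M: "prob_space M" and gr: "gen_proc M G1 \<rho>" and gx: "gen_proc M G2 \<xi>"
  shows "0 \<le> N_val M I \<rho> \<xi> \<and> N_val M I \<rho> \<xi> \<le> 2"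
proof -
  have b: "\<omega> \<in> space M \<Longrightarrow> 0 \<le> Hv (\<lambda>t. \<rho> t \<omega>) (\<lambda>t. \<xi> t \<omega>) (I \<omega>) \<and> Hv (\<lambda>t. \<rho> t \<omega>) (\<lambda>t. \<xi> t \<omega>) (I \<omega>) \<le> 2" for \<omega>
    by (rule Hv_bounds[OF gp_pth[OF gr] gp_pth[OF gx]])
  show ?thesis unfolding N_form
  proof
    show "0 \<le> (\<integral>\<omega>. Hv (\<lambda>t. \<rho> t \<omega>) (\<lambda>t. \<xi> t \<omega>) (I \<omega>) \<partial>M)"
      by (rule Bochner_Integration.integral_nonneg) (use b in blast)
    show "(\<integral>\<omega>. Hv (\<lambda>t. \<rho> t \<omega>) (\<lambda>t. \<xi> t \<omega>) (I \<omega>) \<partial>M) \<le> 2"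
    proof (rule int_le_const[OF M])
      show "AE \<omega> in M. Hv (\<lambda>t. \<rho> t \<omega>) (\<lambda>t. \<xi> t \<omega>) (I \<omega>) \<le> 2"
        using AE_space by eventually_elim (use b in blast)
    qed simp
  qed
qed


lemma NV:
  assumes M: "prob_space M" and C: "complete_measure M" and I[measurable]: "I \<in> measurable M (count_space UNIV)"
    and m1: "measure M {\<omega>\<in>space M. I \<omega> = 1} = 1/2" and m2: "measure M {\<omega>\<in>space M. I \<omega> = 2} = 1/2"
    and ax: "AE \<omega> in M. \<forall>t\<in>{0..1}. \<xi> t \<omega> = x t"
    and a1: "AE \<omega> in M. I \<omega> = 1 \<longrightarrow> (\<forall>t\<in>{0..1}. \<rho> t \<omega> = r1 t)"
    and a2: "AE \<omega> in M. I \<omega> = 2 \<longrightarrow> (\<forall>t\<in>{0..1}. \<rho> t \<omega> = r2 t)"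
  shows "N_val M I \<rho> \<xi> = (Hv r1 x 1 + Hv r2 x 2) / 2"
proof -
  interpret prob_space M by fact
  define A1 where "A1 = {\<omega>\<in>space M. I \<omega> = 1}"
  define A2 where "A2 = {\<omega>\<in>space M. I \<omega> = 2}"
  have A1m: "A1 \<in> sets M" unfolding A1_def using I by measurable
  have A2m: "A2 \<in> sets M" unfolding A2_def using I by measurable
  have "prob (A1 \<union> A2) = prob A1 + prob A2"
    by (rule finite_measure_Union[OF A1m A2m]) (auto simp: A1_def A2_def)
  then have "prob (A1 \<union> A2) = 1" using m1 m2 by (simp add: A1_def A2_def)
  then have AEI: "AE \<omega> in M. \<omega> \<in> A1 \<union> A2" by (rule AE_prob_1)
  define g where "g \<omega> = (if I \<omega> = 1 then Hv r1 x 1 else Hv r2 x 2)" for \<omega>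
  have AEg: "AE \<omega> in M. Hv (\<lambda>t. \<rho> t \<omega>) (\<lambda>t. \<xi> t \<omega>) (I \<omega>) = g \<omega>"
    using AEI ax a1 a2
  proof eventually_elim
    case (elim \<omega>)
    have ex: "rs (\<lambda>t. \<xi> t \<omega>) = rs x" using elim by (intro rs_cong) auto
    show ?case
    proof (cases "I \<omega> = 1")
      case True
      have "rs (\<lambda>t. \<rho> t \<omega>) = rs r1" using elim True by (intro rs_cong) auto
      from Hv_cong[OF this ex] show ?thesis using True by (simp add: g_def)
    next
      case False
      then have I2: "I \<omega> = 2" using elim by (auto simp: A1_def A2_def)
      have "rs (\<lambda>t. \<rho> t \<omega>) = rs r2" using elim I2 by (intro rs_cong) auto
      from Hv_cong[OF this ex] show ?thesis using I2 by (simp add: g_def)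
    qed
  qed
  have gm: "g \<in> borel_measurable M" unfolding g_def using I by measurable
  have Gm: "(\<lambda>\<omega>. Hv (\<lambda>t. \<rho> t \<omega>) (\<lambda>t. \<xi> t \<omega>) (I \<omega>)) \<in> borel_measurable M"
    by (rule complete_meas[OF C gm AEg])
  have "N_val M I \<rho> \<xi> = integral\<^sup>L M g"
    unfolding N_form by (rule integral_cong_AE[OF Gm gm AEg])
  also have "\<dots> = (\<integral>\<omega>. Hv r2 x 2 + (Hv r1 x 1 - Hv r2 x 2) * indicator A1 \<omega> \<partial>M)"
    by (rule Bochner_Integration.integral_cong) (auto simp: g_def A1_def indicator_def)
  also have "\<dots> = Hv r2 x 2 + (Hv r1 x 1 - Hv r2 x 2) * measure M A1"
  proof -
    have "(\<integral>\<omega>. Hv r2 x 2 + (Hv r1 x 1 - Hv r2 x 2) * indicator A1 \<omega> \<partial>M) =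
        (\<integral>\<omega>. Hv r2 x 2 \<partial>M) + (\<integral>\<omega>. (Hv r1 x 1 - Hv r2 x 2) * indicator A1 \<omega> \<partial>M)"
    proof (rule Bochner_Integration.integral_add)
      show "integrable M (\<lambda>\<omega>. Hv r2 x 2)" by (rule integrable_const)
      have "emeasure M A1 < \<infinity>" by (simp add: less_top[symmetric])
      then have "integrable M (indicator A1 :: 'a \<Rightarrow> real)" by (rule integrable_real_indicator[OF A1m])
      then show "integrable M (\<lambda>\<omega>. (Hv r1 x 1 - Hv r2 x 2) * indicator A1 \<omega>)" by (rule integrable_mult_right)
    qed
    also have "\<dots> = Hv r2 x 2 + (Hv r1 x 1 - Hv r2 x 2) * measure M A1"
    proof -
      have "A1 \<inter> space M = A1" using sets.sets_into_space[OF A1m] by blast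
      then show ?thesis by (simp add: prob_space)
    qed
    finally show ?thesis .
  qed
  also have "\<dots> = (Hv r1 x 1 + Hv r2 x 2) / 2"
  proof -
    have h: "measure M A1 = 1/2" using m1 by (simp add: A1_def)
    show ?thesis unfolding h by (simp add: field_simps)
  qed
  finally show ?thesis .
qed



lemma stp_rc: "continuous (at_right u) (\<lambda>s. stp c s)"
proof -
  have "eventually (\<lambda>s. stp c s = stp c u) (at_right u)"
  proof (cases "c \<le> u")
    case True then show ?thesis unfolding eventually_at_right_field
      by (intro exI[of _ "u+1"]) (auto simp: stp_def)
  next
    case False then show ?thesis unfolding eventually_at_right_field
      by (intro exI[of _ c]) (auto simp: stp_def)
  qed
  then have "((\<lambda>s. stp c s) \<longlongrightarrow> stp c u) (at_right u)" by (rule tendsto_eventually)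
  then show ?thesis by (simp add: continuous_within)
qed

lemma stp_ll: "\<exists>l. ((\<lambda>s. stp c s) \<longlongrightarrow> l) (at_left u)"
proof (cases "c < u")
  case True
  have "eventually (\<lambda>s. stp c s = 1) (at_left u)" unfolding eventually_at_left_field
    using True by (intro exI[of _ c]) (auto simp: stp_def)
  then show ?thesis by (intro exI[of _ 1]) (rule tendsto_eventually)
next
  case False
  have "eventually (\<lambda>s. stp c s = 0) (at_left u)" unfolding eventually_at_left_field
    using False by (intro exI[of _ "u - 1"]) (auto simp: stp_def)
  then show ?thesis by (intro exI[of _ 0]) (rule tendsto_eventually)
qed

lemma stp_mono: "mono_on {0..1} (stp c)"
  unfolding mono_on_def stp_def by auto

lemma stp_props:
  assumes "c \<in> {0..1}"
  shows "mono_on {0..1} (\<lambda>s. stp c s) \<and> 0 \<le> stp c 0 \<and> stp c 1 = 1 \<and>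
        (\<forall>t\<in>{0..<1}. continuous (at_right t) (\<lambda>s. stp c s)) \<and>
        (\<forall>t\<in>{0<..1}. \<exists>l. ((\<lambda>s. stp c s) \<longlongrightarrow> l) (at_left t))"
proof -
  have a: "0 \<le> stp c 0" "stp c 1 = 1" using assms by (auto simp: stp_def)
  have b: "mono_on {0..1} (\<lambda>s. stp c s)" using stp_mono[of c] by simp
  show ?thesis using a b stp_rc[of _ c] stp_ll[of c] by blast
qed

lemma gp_stp: assumes "c \<in> {0..1}" shows "gen_proc M G (\<lambda>s \<omega>. stp c s)"
  unfolding gen_proc_def using stp_props[OF assms] by (intro conjI ballI measurable_const) auto

lemma filtr1_gen:
  assumes I: "I \<in> measurable M (count_space UNIV)"
  shows "I -` A \<inter> space M \<in> sets (filtr1 M I t)"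
proof -
  let ?G = "{I -` A \<inter> space M | A. True} \<union> null_sets M"
  have G: "?G \<subseteq> sets M" using measurable_sets[OF I] by auto
  have GP: "?G \<subseteq> Pow (space M)" using G sets.sets_into_space by blast
  have S: "sets (filtr1 M I t) = sigma_sets (space M) ?G" unfolding filtr1_def by (rule sets_measure_of[OF GP])
  show ?thesis unfolding S by (rule sigma_sets.Basic) blast
qed

lemma gp_rho:
  assumes I: "I \<in> measurable M (count_space UNIV)" and t: "t \<in> {0..1}"
  shows "gen_proc M (filtr1 M I) (\<lambda>s \<omega>. stp (if I \<omega> = 1 then t else 1) s)"
proof -
  have Mb: "\<forall>s\<in>{0..1}. (\<lambda>\<omega>. stp (if I \<omega> = 1 then t else 1) s) \<in> borel_measurable (filtr1 M I s)"
  proof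
    fix s :: real
    have eq: "(\<lambda>\<omega>. stp (if I \<omega> = 1 then t else 1) s) = (\<lambda>\<omega>. if \<omega> \<in> I -` {1} then stp t s else stp 1 s)"
      by auto
    have A: "I -` {1} \<inter> space (filtr1 M I s) \<in> sets (filtr1 M I s)"
      using filtr1_gen[OF I, of "{1}" s] filtr1_facts(1)[OF I, of s] by simp
    show "(\<lambda>\<omega>. stp (if I \<omega> = 1 then t else 1) s) \<in> borel_measurable (filtr1 M I s)"
      unfolding eq by (rule measurable_If_set[OF measurable_const measurable_const A]) simp_all
  qed
  have P: "\<forall>\<omega>\<in>space M. mono_on {0..1} (\<lambda>s. stp (if I \<omega> = 1 then t else 1) s) \<and>
        0 \<le> stp (if I \<omega> = 1 then t else 1) 0 \<and> stp (if I \<omega> = 1 then t else 1) 1 = 1 \<and>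
        (\<forall>u\<in>{0..<1}. continuous (at_right u) (\<lambda>s. stp (if I \<omega> = 1 then t else 1) s)) \<and>
        (\<forall>u\<in>{0<..1}. \<exists>l. ((\<lambda>s. stp (if I \<omega> = 1 then t else 1) s) \<longlongrightarrow> l) (at_left u))"
  proof
    fix \<omega>
    have "(if I \<omega> = 1 then t else 1) \<in> {0..1}" using t by auto
    then show "mono_on {0..1} (\<lambda>s. stp (if I \<omega> = 1 then t else 1) s) \<and>
        0 \<le> stp (if I \<omega> = 1 then t else 1) 0 \<and> stp (if I \<omega> = 1 then t else 1) 1 = 1 \<and>
        (\<forall>u\<in>{0..<1}. continuous (at_right u) (\<lambda>s. stp (if I \<omega> = 1 then t else 1) s)) \<and>
        (\<forall>u\<in>{0<..1}. \<exists>l. ((\<lambda>s. stp (if I \<omega> = 1 then t else 1) s) \<longlongrightarrow> l) (at_left u))"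
      by (rule stp_props)
  qed
  show ?thesis unfolding gen_proc_def using Mb P by (intro conjI)
qed



theorem mainTheorem19:
  fixes M :: "'a measure" and I :: "'a \<Rightarrow> nat"
  assumes "prob_space M"
    and "complete_measure M"
    and "I \<in> measurable M (count_space UNIV)"
    and "measure M {\<omega>\<in>space M. I \<omega> = 1} = 1/2"
    and "measure M {\<omega>\<in>space M. I \<omega> = 2} = 1/2"
  shows "(SUP \<xi>\<in>{\<xi>. gen_proc M (filtr2 M) \<xi>}. INF \<rho>\<in>{\<rho>. gen_proc M (filtr1 M I) \<rho>}. N_val M I \<rho> \<xi>) \<le> 1/2
       \<and> 1/2 < (INF \<rho>\<in>{\<rho>. gen_proc M (filtr1 M I) \<rho>}. SUP \<xi>\<in>{\<xi>. gen_proc M (filtr2 M) \<xi>}. N_val M I \<rho> \<xi>)"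
proof -
  note M = assms(1) and C = assms(2) and I = assms(3) and m1 = assms(4) and m2 = assms(5)
  define X where "X = {\<xi>. gen_proc M (filtr2 M) \<xi>}"
  define R where "R = {\<rho>. gen_proc M (filtr1 M I) \<rho>}"
  have one: "(1::real) \<in> {0..1}" by simp
  have Xne: "X \<noteq> {}" using gp_stp[OF one, of M "filtr2 M"] unfolding X_def by blast
  have Rne: "R \<noteq> {}" using gp_stp[OF one, of M "filtr1 M I"] unfolding R_def by blast
  have bnd: "0 \<le> N_val M I \<rho> \<xi> \<and> N_val M I \<rho> \<xi> \<le> 2" if "\<rho> \<in> R" "\<xi> \<in> X" for \<rho> \<xi>
    using N_bounds[OF M, of "filtr1 M I" \<rho> "filtr2 M" \<xi> I] that by (simp add: R_def X_def)
  have part1: "(SUP \<xi>\<in>X. INF \<rho>\<in>R. N_val M I \<rho> \<xi>) \<le> 1/2"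
  proof (rule cSUP_least[OF Xne])
    fix \<xi> assume \<xi>: "\<xi> \<in> X"
    obtain x where x: "pth x" and ax: "AE \<omega> in M. \<forall>t\<in>{0..1}. \<xi> t \<omega> = x t"
      using XI[OF M] \<xi> unfolding X_def by blast
    show "(INF \<rho>\<in>R. N_val M I \<rho> \<xi>) \<le> 1/2"
    proof (rule field_le_epsilon)
      fix e :: real assume e: "0 < e"
      define L where "L = Sup (x ` {0..<1})"
      have "L - e < L" using e by simp
      then obtain y where y: "y \<in> x ` {0..<1}" "L - e < y"
        unfolding L_def by (rule less_cSupE) auto
      then obtain t' where t': "t' \<in> {0..<1}" "L - e < x t'" by auto
      define t where "t = (t' + 1) / 2"
      have t01: "t \<in> {0..1}" using t' by (auto simp: t_def)
      define \<rho>0 where "\<rho>0 = (\<lambda>s \<omega>. stp (if I \<omega> = 1 then t else 1) s)"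
      have \<rho>0R: "\<rho>0 \<in> R" unfolding R_def \<rho>0_def using gp_rho[OF I t01] by simp
      have a1: "AE \<omega> in M. I \<omega> = 1 \<longrightarrow> (\<forall>s\<in>{0..1}. \<rho>0 s \<omega> = stp t s)"
        by (rule AE_I2) (simp add: \<rho>0_def)
      have a2: "AE \<omega> in M. I \<omega> = 2 \<longrightarrow> (\<forall>s\<in>{0..1}. \<rho>0 s \<omega> = stp 1 s)"
        by (rule AE_I2) (simp add: \<rho>0_def)
      have "N_val M I \<rho>0 \<xi> = (Hv (stp t) x 1 + Hv (stp 1) x 2) / 2"
        by (rule NV[OF M C I m1 m2 ax a1 a2])
      also have "\<dots> \<le> (1 + (L - x t')/2) / 2"
        using D1[OF x t'(1)] unfolding t_def L_def by (intro divide_right_mono) simp_all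
      also have "\<dots> \<le> 1/2 + e" using t'(2) e by simp
      finally have "N_val M I \<rho>0 \<xi> \<le> 1/2 + e" .
      moreover have "(INF \<rho>\<in>R. N_val M I \<rho> \<xi>) \<le> N_val M I \<rho>0 \<xi>"
      proof (rule cINF_lower[OF _ \<rho>0R])
        show "bdd_below ((\<lambda>\<rho>. N_val M I \<rho> \<xi>) ` R)"
          using bnd \<xi> by (intro bdd_belowI[where m=0]) auto
      qed
      ultimately show "(INF \<rho>\<in>R. N_val M I \<rho> \<xi>) \<le> 1/2 + e" by linarith
    qed
  qed
  have part2: "23/40 \<le> (INF \<rho>\<in>R. SUP \<xi>\<in>X. N_val M I \<rho> \<xi>)"
  proof (rule cINF_greatest[OF Rne])
    fix \<rho> assume \<rho>: "\<rho> \<in> R"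
    have m1': "measure M {\<omega>\<in>space M. I \<omega> = 1} \<noteq> 0" using m1 by simp
    have m2': "measure M {\<omega>\<in>space M. I \<omega> = 2} \<noteq> 0" using m2 by simp
    obtain r1 where r1: "pth r1" and a1: "AE \<omega> in M. I \<omega> = 1 \<longrightarrow> (\<forall>t\<in>{0..1}. \<rho> t \<omega> = r1 t)"
      using RHO[OF _ I m1'] \<rho> unfolding R_def by blast
    obtain r2 where r2: "pth r2" and a2: "AE \<omega> in M. I \<omega> = 2 \<longrightarrow> (\<forall>t\<in>{0..1}. \<rho> t \<omega> = r2 t)"
      using RHO[OF _ I m2'] \<rho> unfolding R_def by blast
    obtain c where c: "c \<in> {0..1}" "23/20 \<le> Hv r1 (stp c) 1 + Hv r2 (stp c) 2"
      using D23[OF r1 r2] by blast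
    define \<xi>c where "\<xi>c = (\<lambda>(s::real) (\<omega>::'a). stp c s)"
    have \<xi>cX: "\<xi>c \<in> X" unfolding X_def \<xi>c_def using gp_stp[OF c(1)] by simp
    have ax: "AE \<omega> in M. \<forall>t\<in>{0..1}. \<xi>c t \<omega> = stp c t" by (rule AE_I2) (simp add: \<xi>c_def)
    have "23/40 \<le> (Hv r1 (stp c) 1 + Hv r2 (stp c) 2) / 2" using c(2) by simp
    also have "\<dots> = N_val M I \<rho> \<xi>c"
      by (rule NV[OF M C I m1 m2 ax a1 a2, symmetric])
    also have "\<dots> \<le> (SUP \<xi>\<in>X. N_val M I \<rho> \<xi>)"
    proof (rule cSUP_upper[OF \<xi>cX])
      show "bdd_above ((\<lambda>\<xi>. N_val M I \<rho> \<xi>) ` X)"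
        using bnd \<rho> by (intro bdd_aboveI[where M=2]) auto
    qed
    finally show "23/40 \<le> (SUP \<xi>\<in>X. N_val M I \<rho> \<xi>)" .
  qed
  show ?thesis using part1 part2 unfolding X_def R_def by simp
qed


end
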